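(* Let $K,G:[0,\infty)\to\mathbb{R}$ be continuous, let $f$ solve $f''+Kf=0$ with $f>0$ on $(0,\infty)$ and $\int_1^\infty f(t)^{-2}dt<\infty$, and let $m$ solve $m''+Gm=0$ with $m(0)=f(0)$, $m'(0)=f'(0)$. Suppose the support of $G-K$ is contained in a bounded interval $[a,b]\subset[1,\infty)$. Then for all $t\ge 0$, $$|(m'f-mf')(t)|\le(\alpha(m)+1)\,\|G-K\|_2\,\|f^2|_{[a,b]}\|_2,$$ where $\|G-K\|_2:=\sqrt{\int_0^\infty|G-K|^2dt}$, $\|f^2|_{[a,b]}\|_2:=\sqrt{\int_a^b f(t)^4dt}$, $\sigma(t):=m(t)/f(t)-1$ for $t>0$, and $\alpha(m):=\sup_{t>0}|\sigma(t)|$. *)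

theory Defs
  imports "HOL-Analysis.Analysis"
begin

end

theory Submission
  imports Defs
begin

lemma real_cs_aux:
  fixes A B C :: real
  assumes A: "A \<ge> 0" and B: "B \<ge> 0" and H: "\<And>l. l > 0 \<Longrightarrow> C \<le> (l * A + B / l) / 2"
  shows "C \<le> sqrt A * sqrt B"
proof (cases "A > 0 \<and> B > 0")
  case True
  define l where "l = sqrt B / sqrt A"
  have lp: "l > 0" using True by (simp add: l_def)
  have "l * A = sqrt A * sqrt B"
  proof -
    have "l * A = sqrt B * (A / sqrt A)" by (simp add: l_def)
    then show ?thesis using True by (simp add: real_div_sqrt mult.commute)
  qed
  moreover have "B / l = sqrt A * sqrt B"
  proof -
    have "B / l = (B / sqrt B) * sqrt A" by (simp add: l_def)
    then show ?thesis using True by (simp add: real_div_sqrt mult.commute)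
  qed
  ultimately show ?thesis using H[OF lp] by simp
next
  case False
  show ?thesis
  proof (rule ccontr)
    assume "\<not> ?thesis"
    then have Cp: "C > 0" using False A B by auto
    show False
    proof (cases "A = 0")
      case True
      define l where "l = B / C + 1"
      have lp: "l > 0"
      proof -
        have "B / C \<ge> 0" using Cp B by simp
        then show ?thesis unfolding l_def by linarith
      qed
      have "C \<le> B / l / 2" using H[OF lp] True by simp
      moreover have "B / l / 2 < C"
      proof -
        have "2 * C * l = 2 * B + 2 * C" using Cp unfolding l_def by (simp add: field_simps)
        then have "B < 2 * C * l" using Cp B by linarith
        then show ?thesis using lp by (simp add: field_simps)
      qed
      ultimately show False by simp
    next
      case False2: False
      then have "B = 0" using False A B by auto
      define l where "l = C / (A + 1)"
      have lp: "l > 0" using Cp A by (simp add: l_def)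
      have "C \<le> l * A / 2" using H[OF lp] \<open>B = 0\<close> by simp
      moreover have "l * A / 2 < C"
      proof -
        have "l * A \<le> l * (A + 1)" using lp by (intro mult_left_mono) auto
        moreover have "l * (A + 1) = C" using A unfolding l_def by (simp add: field_simps)
        ultimately show ?thesis using Cp by linarith
      qed
      ultimately show False by simp
    qed
  qed
qed

lemma cs_int:
  fixes u v :: "real \<Rightarrow> real"
  assumes iu: "(\<lambda>s. (u s)\<^sup>2) integrable_on S" and iv: "(\<lambda>s. (v s)\<^sup>2) integrable_on S"
    and iuv: "(\<lambda>s. \<bar>u s * v s\<bar>) integrable_on S"
  shows "integral S (\<lambda>s. \<bar>u s * v s\<bar>) \<le> sqrt (integral S (\<lambda>s. (u s)\<^sup>2)) * sqrt (integral S (\<lambda>s. (v s)\<^sup>2))"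
proof (rule real_cs_aux)
  show "integral S (\<lambda>s. (u s)\<^sup>2) \<ge> 0" by (rule integral_nonneg[OF iu]) simp
  show "integral S (\<lambda>s. (v s)\<^sup>2) \<ge> 0" by (rule integral_nonneg[OF iv]) simp
  fix l :: real assume lp: "l > 0"
  have ptw: "\<bar>u s * v s\<bar> \<le> (l * (u s)\<^sup>2 + (v s)\<^sup>2 / l) / 2" for s
  proof -
    have "0 \<le> (l * \<bar>u s\<bar> - \<bar>v s\<bar>)\<^sup>2" by simp
    then have "2 * l * \<bar>u s * v s\<bar> \<le> l * l * (u s)\<^sup>2 + (v s)\<^sup>2"
      by (simp add: power2_eq_square abs_mult algebra_simps)
    then show ?thesis using lp by (simp add: field_simps power2_eq_square)
  qed
  have i2: "(\<lambda>s. (l * (u s)\<^sup>2 + (v s)\<^sup>2 / l) / 2) integrable_on S"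
  proof -
    have "(\<lambda>s. (l/2) * (u s)\<^sup>2 + (1/(2*l)) * (v s)\<^sup>2) integrable_on S"
      by (rule integrable_add[OF integrable_cmul[OF iu, of "l/2", unfolded real_scaleR_def] integrable_cmul[OF iv, of "1/(2*l)", unfolded real_scaleR_def]])
    moreover have "(\<lambda>s. (l/2) * (u s)\<^sup>2 + (1/(2*l)) * (v s)\<^sup>2) = (\<lambda>s. (l * (u s)\<^sup>2 + (v s)\<^sup>2 / l) / 2)"
      by (auto simp: field_simps)
    ultimately show ?thesis by simp
  qed
  have "integral S (\<lambda>s. \<bar>u s * v s\<bar>) \<le> integral S (\<lambda>s. (l * (u s)\<^sup>2 + (v s)\<^sup>2 / l) / 2)"
    by (rule integral_le[OF iuv i2 ptw])
  also have "\<dots> = (l * integral S (\<lambda>s. (u s)\<^sup>2) + integral S (\<lambda>s. (v s)\<^sup>2) / l) / 2"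
  proof -
    have "(\<lambda>s. (l * (u s)\<^sup>2 + (v s)\<^sup>2 / l) / 2) = (\<lambda>s. (l/2) * (u s)\<^sup>2 + (1/(2*l)) * (v s)\<^sup>2)"
      by (auto simp: field_simps)
    note I1 = integrable_cmul[OF iu, of "l/2", unfolded real_scaleR_def]
    note I2 = integrable_cmul[OF iv, of "1/(2*l)", unfolded real_scaleR_def]
    have e1: "integral S (\<lambda>s. (l/2) * (u s)\<^sup>2 + (1/(2*l)) * (v s)\<^sup>2) = integral S (\<lambda>s. (l/2) * (u s)\<^sup>2) + integral S (\<lambda>s. (1/(2*l)) * (v s)\<^sup>2)"
      by (rule integral_add[OF I1 I2])
    have e2: "integral S (\<lambda>s. (l/2) * (u s)\<^sup>2) = (l/2) * integral S (\<lambda>s. (u s)\<^sup>2)"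
      by (rule integral_mult[OF iu, symmetric])
    have e3: "integral S (\<lambda>s. (1/(2*l)) * (v s)\<^sup>2) = (1/(2*l)) * integral S (\<lambda>s. (v s)\<^sup>2)"
      by (rule integral_mult[OF iv, symmetric])
    have "integral S (\<lambda>s. (l * (u s)\<^sup>2 + (v s)\<^sup>2 / l) / 2) = (l/2) * integral S (\<lambda>s. (u s)\<^sup>2) + (1/(2*l)) * integral S (\<lambda>s. (v s)\<^sup>2)"
      by (simp only: \<open>(\<lambda>s. (l * (u s)\<^sup>2 + (v s)\<^sup>2 / l) / 2) = _\<close> e1 e2 e3)
    then show ?thesis by (simp add: field_simps)
  qed
  finally show "integral S (\<lambda>s. \<bar>u s * v s\<bar>) \<le> (l * integral S (\<lambda>s. (u s)\<^sup>2) + integral S (\<lambda>s. (v s)\<^sup>2) / l) / 2" .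
qed

theorem lemma2p2:
  fixes K G f f' m m' :: "real \<Rightarrow> real" and a b :: real
  assumes contK: "continuous_on {0..} K"
    and contG: "continuous_on {0..} G"
    and f_deriv: "\<And>t. t \<ge> 0 \<Longrightarrow> (f has_real_derivative f' t) (at t within {0..})"
    and f'_deriv: "\<And>t. t \<ge> 0 \<Longrightarrow> (f' has_real_derivative (- K t * f t)) (at t within {0..})"
    and f_pos: "\<And>t. t > 0 \<Longrightarrow> f t > 0"
    and f_int: "(\<lambda>t. 1 / (f t)\<^sup>2) integrable_on {1..}"
    and m_deriv: "\<And>t. t \<ge> 0 \<Longrightarrow> (m has_real_derivative m' t) (at t within {0..})"
    and m'_deriv: "\<And>t. t \<ge> 0 \<Longrightarrow> (m' has_real_derivative (- G t * m t)) (at t within {0..})"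
    and m0: "m 0 = f 0" and m'0: "m' 0 = f' 0"
    and ab: "1 \<le> a" "a \<le> b"
    and supp: "\<And>t. t \<ge> 0 \<Longrightarrow> t \<notin> {a..b} \<Longrightarrow> G t = K t"
    and t: "t \<ge> 0"
  shows "ereal \<bar>m' t * f t - m t * f' t\<bar>
    \<le> ((SUP s\<in>{0<..}. ereal \<bar>m s / f s - 1\<bar>) + 1)
       * ereal (sqrt (integral {0..} (\<lambda>s. \<bar>G s - K s\<bar>\<^sup>2))
                * sqrt (integral {a..b} (\<lambda>s. (f s) ^ 4)))"
proof -
  define W where "W s = m' s * f s - m s * f' s" for s
  define p where "p s = K s - G s" for s
  define h where "h s = p s * (m s * f s)" for s
  have contf: "continuous_on {0..} f" by (rule DERIV_continuous_on[OF f_deriv]) auto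
  have contm: "continuous_on {0..} m" by (rule DERIV_continuous_on[OF m_deriv]) auto
  have sub: "{a..b} \<subseteq> {0..}" using ab by auto
  have cf: "continuous_on {a..b} f" using continuous_on_subset[OF contf sub] .
  have cm: "continuous_on {a..b} m" using continuous_on_subset[OF contm sub] .
  have cK: "continuous_on {a..b} K" using continuous_on_subset[OF contK sub] .
  have cG: "continuous_on {a..b} G" using continuous_on_subset[OF contG sub] .
  have cp: "continuous_on {a..b} p" unfolding p_def using cK cG by (intro continuous_intros)
  have fpos: "f s > 0" if "s \<in> {a..b}" for s using that ab f_pos by auto
  have ch: "continuous_on {a..b} h" unfolding h_def using cp cm cf by (intro continuous_intros)
  have Wd: "(W has_real_derivative h s) (at s within {0..})" if s: "s \<ge> 0" for s
  proof -
    note d = DERIV_diff[OF DERIV_mult[OF m'_deriv[OF s] f_deriv[OF s]] DERIV_mult[OF m_deriv[OF s] f'_deriv[OF s]]]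
    have "W = (\<lambda>x. m' x * f x - m x * f' x)" unfolding W_def by auto
    then show ?thesis using d by (auto elim!: DERIV_cong simp: h_def p_def algebra_simps)
  qed
  have W0: "W 0 = 0" unfolding W_def using m0 m'0 by simp
  have hint: "(h has_integral W t) {0..t}"
  proof -
    have "(h has_integral W t - W 0) {0..t}"
      by (rule fundamental_theorem_of_calculus[OF t])
         (auto simp: has_real_derivative_iff_has_vector_derivative[symmetric] intro: DERIV_subset[OF Wd])
    then show ?thesis using W0 by simp
  qed
  have "((\<lambda>s. if s \<in> {a..b} then h s else 0) has_integral W t) {0..t}"
  proof (rule has_integral_cong[THEN iffD1, OF _ hint])
    fix s assume "s \<in> {0..t}"
    then show "h s = (if s \<in> {a..b} then h s else 0)" using supp[of s] by (auto simp: h_def p_def)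
  qed
  then have "(h has_integral W t) ({a..b} \<inter> {0..t})" by (simp only: has_integral_restrict_Int)
  then have hint2: "(h has_integral W t) {a..min b t}" using ab by (simp add: Int_atLeastAtMost max_absorb1)
  define C where "C = integral {a..b} (\<lambda>s. \<bar>h s\<bar>)"
  have cah: "continuous_on {a..b} (\<lambda>s. \<bar>h s\<bar>)" using ch by (intro continuous_intros)
  have WC: "\<bar>W t\<bar> \<le> C"
  proof -
    have sub2: "{a..min b t} \<subseteq> {a..b}" by auto
    have "\<bar>W t\<bar> = norm (integral {a..min b t} h)" using hint2 by (simp add: integral_unique)
    also have "\<dots> \<le> integral {a..min b t} (\<lambda>s. \<bar>h s\<bar>)"
      by (rule integral_norm_bound_integral)
         (auto intro!: integrable_continuous_interval continuous_on_subset[OF ch sub2] continuous_on_subset[OF cah sub2])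
    also have "\<dots> \<le> C" unfolding C_def
      by (rule integral_subset_le[OF sub2])
         (auto intro!: integrable_continuous_interval continuous_on_subset[OF cah sub2] cah)
    finally show ?thesis .
  qed
  have I1: "integral {0..} (\<lambda>s. \<bar>G s - K s\<bar>\<^sup>2) = integral {a..b} (\<lambda>s. (p s)\<^sup>2)"
  proof -
    have "((\<lambda>s. (p s)\<^sup>2) has_integral integral {a..b} (\<lambda>s. (p s)\<^sup>2)) ({a..b} \<inter> {0..})"
      using ab by (auto intro!: integrable_integral integrable_continuous_interval continuous_intros cp simp: Int_absorb2)
    then have "((\<lambda>s. if s \<in> {a..b} then (p s)\<^sup>2 else 0) has_integral integral {a..b} (\<lambda>s. (p s)\<^sup>2)) {0..}"
      by (simp only: has_integral_restrict_Int)
    moreover have "(if s \<in> {a..b} then (p s)\<^sup>2 else 0) = \<bar>G s - K s\<bar>\<^sup>2" if "s \<in> {0..}" for s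
      using supp[of s] that by (auto simp: p_def power2_commute)
    ultimately have "((\<lambda>s. \<bar>G s - K s\<bar>\<^sup>2) has_integral integral {a..b} (\<lambda>s. (p s)\<^sup>2)) {0..}"
      by (subst has_integral_cong[symmetric]) auto
    then show ?thesis by (rule integral_unique)
  qed
  define A1 where "A1 = integral {a..b} (\<lambda>s. (p s)\<^sup>2)"
  define A2 where "A2 = integral {a..b} (\<lambda>s. (f s) ^ 4)"
  have A1nn: "A1 \<ge> 0" unfolding A1_def
    by (rule integral_nonneg) (auto intro!: integrable_continuous_interval continuous_intros cp)
  have A2nn: "A2 \<ge> 0" unfolding A2_def
    by (rule integral_nonneg) (auto intro!: integrable_continuous_interval continuous_intros cf)
  have CS1: "C \<le> sqrt A1 * sqrt (integral {a..b} (\<lambda>s. (m s * f s)\<^sup>2))"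
    unfolding C_def A1_def h_def
    by (rule cs_int) (auto intro!: integrable_continuous_interval continuous_intros cp cm cf)
  define q where "q s = p s * m s / f s" for s
  have cq: "continuous_on {a..b} q" unfolding q_def using cp cm cf fpos
    by (intro continuous_intros) (auto dest: fpos[THEN less_imp_neq, THEN not_sym])
  have C2: "C = integral {a..b} (\<lambda>s. \<bar>q s * (f s)\<^sup>2\<bar>)" unfolding C_def
  proof (rule integral_cong)
    fix s assume "s \<in> {a..b}"
    then have "f s \<noteq> 0" using fpos by force
    then show "\<bar>h s\<bar> = \<bar>q s * (f s)\<^sup>2\<bar>" by (simp add: q_def h_def power2_eq_square)
  qed
  have A2': "A2 = integral {a..b} (\<lambda>s. ((f s)\<^sup>2)\<^sup>2)" unfolding A2_def
    by (rule integral_cong) simp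
  have CS2: "C \<le> sqrt (integral {a..b} (\<lambda>s. (q s)\<^sup>2)) * sqrt A2"
    unfolding C2 A2'
    by (rule cs_int) (auto intro!: integrable_continuous_interval continuous_intros cq cf)
  define S where "S = (SUP s\<in>{0<..}. ereal \<bar>m s / f s - 1\<bar>)"
  have Sge: "ereal \<bar>m s / f s - 1\<bar> \<le> S" if "s > 0" for s
    unfolding S_def using that by (intro SUP_upper) auto
  have S0: "S \<ge> 0" proof -
    have "0 \<le> ereal \<bar>m 1 / f 1 - 1\<bar>" by simp
    also have "\<dots> \<le> S" by (rule Sge) simp
    finally show ?thesis .
  qed
  have RHSnn: "0 \<le> (S + 1) * ereal (sqrt A1 * sqrt A2)"
    using S0 A1nn A2nn by (simp add: ereal_zero_le_0_iff add_nonneg_nonneg)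
  have Wt: "\<bar>m' t * f t - m t * f' t\<bar> = \<bar>W t\<bar>" by (simp add: W_def)
  have main: "ereal \<bar>W t\<bar> \<le> (S + 1) * ereal (sqrt A1 * sqrt A2)"
  proof (cases S)
    case (real R)
    have Rnn: "R \<ge> 0" using S0 real by simp
    have bnd: "\<bar>h s\<bar> \<le> (R + 1) * \<bar>p s * (f s)\<^sup>2\<bar>" if s: "s \<in> {a..b}" for s
    proof -
      have fs: "f s > 0" using fpos[OF s] .
      have "\<bar>m s / f s - 1\<bar> \<le> R" using Sge[of s] s ab real by auto
      then have "\<bar>m s / f s\<bar> \<le> R + 1" by linarith
      then have "\<bar>m s\<bar> \<le> (R + 1) * f s" using fs by (simp add: abs_div field_simps)
      then have "\<bar>p s\<bar> * \<bar>m s\<bar> * f s \<le> \<bar>p s\<bar> * ((R + 1) * f s) * f s"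
        using fs by (intro mult_right_mono mult_left_mono) auto
      then show ?thesis using fs by (simp add: h_def abs_mult power2_eq_square algebra_simps)
    qed
    have "C \<le> integral {a..b} (\<lambda>s. (R + 1) * \<bar>p s * (f s)\<^sup>2\<bar>)" unfolding C_def
      by (rule integral_le) (auto intro!: integrable_continuous_interval continuous_intros cp cf ch bnd)
    also have "\<dots> = (R + 1) * integral {a..b} (\<lambda>s. \<bar>p s * (f s)\<^sup>2\<bar>)"
      by (rule integral_mult[symmetric]) (auto intro!: integrable_continuous_interval continuous_intros cp cf)
    also have "\<dots> \<le> (R + 1) * (sqrt A1 * sqrt A2)"
      unfolding A1_def A2'
      using Rnn by (intro mult_left_mono cs_int) (auto intro!: integrable_continuous_interval continuous_intros cp cf)
    finally have "\<bar>W t\<bar> \<le> (R + 1) * (sqrt A1 * sqrt A2)" using WC by linarith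
    then show ?thesis using real by simp
  next
    case PInf
    show ?thesis
    proof (cases "sqrt A1 * sqrt A2 > 0")
      case True
      have "(S + 1) * ereal (sqrt A1 * sqrt A2) = \<infinity>"
        using PInf True by (auto simp: zero_less_mult_iff)
      then show ?thesis by (simp only: ereal_less_eq(1))
    next
      case False
      then have "A1 = 0 \<or> A2 = 0" using A1nn A2nn by (auto simp: zero_less_mult_iff)
      then have "C \<le> 0" using CS1 CS2 by auto
      then have "\<bar>W t\<bar> = 0" using WC by linarith
      then show ?thesis using RHSnn by (simp add: zero_ereal_def)
    qed
  next
    case MInf
    then show ?thesis using S0 by simp
  qed
  then show ?thesis unfolding Wt I1 S_def A1_def A2_def .
qed
end
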